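(* Let $G=(V,E)$ be a graph with node weights $c_v\ge1$, and let $\lambda\in\mathbb R$. Let $x\in\mathbb R^V$ satisfy $x\ge0$, $\sum_{v\in V}c_vx_v=1$, and $\sum_{v\in V}x_v\,q(\sigma)_v\ge\lambda$ for every ordering $\sigma$ of $V$. Then there exists $\theta\in[0,1]$ such that the set $S_\theta=\{v\in V: x_v\ge\theta\}$ is nonempty and has density $\rho(S_\theta)\ge\lambda$.
   Context: For nonempty $S\subseteq V$, $\rho(S)=|E(S)|/\sum_{v\in S}c_v$, where $E(S)$ is the set of edges with both endpoints in $S$. For an ordering $\sigma$ of $V$ and $v\in V$, $q(\sigma)_v=|\{\{u,v\}\in E: u \text{ precedes } v \text{ in }\sigma\}|$. *)

theory Defs
  imports Complex_Main
begin

definition simple_graph :: "'a set \<Rightarrow> 'a set set \<Rightarrow> bool" where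
  "simple_graph V E \<longleftrightarrow> finite V \<and>
     (\<forall>e\<in>E. \<exists>u v. e = {u, v} \<and> u \<noteq> v \<and> u \<in> V \<and> v \<in> V)"

definition induced_edges :: "'a set set \<Rightarrow> 'a set \<Rightarrow> 'a set set" where
  "induced_edges E S = {e \<in> E. e \<subseteq> S}"

definition density :: "'a set set \<Rightarrow> ('a \<Rightarrow> real) \<Rightarrow> 'a set \<Rightarrow> real" where
  "density E c S = real (card (induced_edges E S)) / (\<Sum>v\<in>S. c v)"

definition is_ordering :: "'a set \<Rightarrow> 'a list \<Rightarrow> bool" where
  "is_ordering V \<sigma> \<longleftrightarrow> distinct \<sigma> \<and> set \<sigma> = V"

definition precedes :: "'a list \<Rightarrow> 'a \<Rightarrow> 'a \<Rightarrow> bool" where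
  "precedes \<sigma> u v \<longleftrightarrow> (\<exists>i j. i < j \<and> j < length \<sigma> \<and> \<sigma> ! i = u \<and> \<sigma> ! j = v)"

definition q :: "'a set set \<Rightarrow> 'a list \<Rightarrow> 'a \<Rightarrow> nat" where
  "q E \<sigma> v = card {e \<in> E. \<exists>u. e = {u, v} \<and> precedes \<sigma> u v}"

end

theory Submission imports Defs begin
fun hv :: "('a \<Rightarrow> real) \<Rightarrow> 'a list \<Rightarrow> real" where
  "hv a [] = 0" | "hv a (u#_) = a u"

lemma abel:
  fixes a g :: "'a \<Rightarrow> real"
  assumes "sorted_wrt (\<lambda>u w. a u \<ge> a w) l" "\<forall>v\<in>set l. a v \<ge> 0"
    "\<forall>i<length l. a (l!i) > hv a (drop (Suc i) l) \<longrightarrow> sum_list (map g (p @ take (Suc i) l)) \<le> B"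
  shows "sum_list (map g p) * hv a l + sum_list (map (\<lambda>v. a v * g v) l) \<le> B * hv a l"
  using assms
proof (induction l arbitrary: p)
  case Nil
  then show ?case by simp
next
  case (Cons v rest)
  define C where "C = sum_list (map g p)"
  have IH: "(C + g v) * hv a rest + sum_list (map (\<lambda>v. a v * g v) rest) \<le> B * hv a rest"
  proof -
    have "\<forall>i<length rest. a (rest!i) > hv a (drop (Suc i) rest) \<longrightarrow> sum_list (map g ((p@[v]) @ take (Suc i) rest)) \<le> B"
    proof (intro allI impI)
      fix i assume "i < length rest" "a (rest!i) > hv a (drop (Suc i) rest)"
      then show "sum_list (map g ((p@[v]) @ take (Suc i) rest)) \<le> B"
        using Cons.prems(3) by (metis Suc_less_eq append.assoc append_Cons append_Nil drop_Suc_Cons length_Cons nth_Cons_Suc take_Suc_Cons)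
    qed
    then show ?thesis using Cons.IH[of "p@[v]"] Cons.prems(1,2) by (simp add: C_def)
  qed
  have ge: "a v \<ge> hv a rest"
    using Cons.prems(1,2) by (cases rest) auto
  show ?case
  proof (cases "a v > hv a rest")
    case True
    have "C + g v \<le> B" using Cons.prems(3)[rule_format, of 0] True by (simp add: C_def)
    then have "(C + g v) * (a v - hv a rest) \<le> B * (a v - hv a rest)"
      using ge by (intro mult_right_mono) auto
    then show ?thesis using IH by (simp add: C_def[symmetric] algebra_simps)
  next
    case False
    then have "a v = hv a rest" using ge by simp
    then show ?thesis using IH by (simp add: C_def[symmetric] algebra_simps)
  qed
qed

lemma precedes_nasym:
  assumes "distinct \<sigma>" "precedes \<sigma> u v" "precedes \<sigma> v u" shows False
proof -
  obtain i j where ij: "i < j" "j < length \<sigma>" "\<sigma>!i = u" "\<sigma>!j = v" using assms(2) unfolding precedes_def by blast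
  obtain i' j' where ij': "i' < j'" "j' < length \<sigma>" "\<sigma>!i' = v" "\<sigma>!j' = u" using assms(3) unfolding precedes_def by blast
  have "i = j'" using ij ij' assms(1) by (metis nth_eq_iff_index_eq order.strict_trans)
  moreover have "j = i'" using ij ij' assms(1) by (metis nth_eq_iff_index_eq order.strict_trans)
  ultimately show False using ij ij' by simp
qed

lemma edge_count:
  assumes G: "simple_graph V E" and ord: "is_ordering V \<sigma>" and SV: "S \<subseteq> V"
    and closed: "\<forall>u v. precedes \<sigma> u v \<longrightarrow> v \<in> S \<longrightarrow> u \<in> S"
  shows "(\<Sum>v\<in>S. q E \<sigma> v) = card (induced_edges E S)"
proof -
  define A where "A v = {e \<in> E. \<exists>u. e = {u, v} \<and> precedes \<sigma> u v}" for v
  have finV: "finite V" using G unfolding simple_graph_def by simp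
  have "E \<subseteq> Pow V" using G unfolding simple_graph_def by auto
  then have finE: "finite E" using finV by (meson finite_Pow_iff finite_subset)
  have finS: "finite S" using SV finV finite_subset by blast
  have dist: "distinct \<sigma>" and setv: "set \<sigma> = V" using ord unfolding is_ordering_def by auto
  have disj: "A v \<inter> A w = {}" if "v \<in> S" "w \<in> S" "v \<noteq> w" for v w
  proof (rule ccontr)
    assume "A v \<inter> A w \<noteq> {}"
    then obtain e u u' where e: "e = {u, v}" "precedes \<sigma> u v" "e = {u', w}" "precedes \<sigma> u' w"
      unfolding A_def by blast
    then have "v = u'" "w = u" using that(3) by (auto simp: doubleton_eq_iff)
    then show False using e precedes_nasym[OF dist] by blast
  qed
  have un: "(\<Union>v\<in>S. A v) = induced_edges E S"
  proof
    show "(\<Union>v\<in>S. A v) \<subseteq> induced_edges E S"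
      unfolding A_def induced_edges_def using closed by auto
  next
    show "induced_edges E S \<subseteq> (\<Union>v\<in>S. A v)"
    proof
      fix e assume "e \<in> induced_edges E S"
      then have eE: "e \<in> E" and eS: "e \<subseteq> S" unfolding induced_edges_def by auto
      then obtain a b where ab: "e = {a, b}" "a \<noteq> b" "a \<in> V" "b \<in> V"
        using G unfolding simple_graph_def by blast
      obtain i where i: "i < length \<sigma>" "\<sigma>!i = a" using ab setv by (metis in_set_conv_nth)
      obtain j where j: "j < length \<sigma>" "\<sigma>!j = b" using ab setv by (metis in_set_conv_nth)
      have "i \<noteq> j" using i j ab by auto
      then consider "i < j" | "j < i" by linarith
      then show "e \<in> (\<Union>v\<in>S. A v)"
      proof cases
        case 1
        then have "precedes \<sigma> a b" unfolding precedes_def using i j by blast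
        then have "e \<in> A b" unfolding A_def using eE ab by blast
        then show ?thesis using eS ab by blast
      next
        case 2
        then have "precedes \<sigma> b a" unfolding precedes_def using i j by blast
        then have "e \<in> A a" unfolding A_def using eE ab by (auto simp: insert_commute)
        then show ?thesis using eS ab by blast
      qed
    qed
  qed
  have "card (\<Union>v\<in>S. A v) = (\<Sum>v\<in>S. card (A v))"
    by (rule card_UN_disjoint) (use finS finE disj in \<open>auto simp: A_def\<close>)
  then show ?thesis using un unfolding q_def A_def by simp
qed

theorem mainTheorem9:
  fixes V :: "'a set" and E :: "'a set set" and c :: "'a \<Rightarrow> real"
    and x :: "'a \<Rightarrow> real" and lam :: real
  assumes G: "simple_graph V E"
    and c_ge: "\<forall>v\<in>V. c v \<ge> 1"
    and x_nonneg: "\<forall>v\<in>V. x v \<ge> 0"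
    and x_norm: "(\<Sum>v\<in>V. c v * x v) = 1"
    and x_orders: "\<forall>\<sigma>. is_ordering V \<sigma> \<longrightarrow> (\<Sum>v\<in>V. x v * real (q E \<sigma> v)) \<ge> lam"
  shows "\<exists>\<theta>::real. 0 \<le> \<theta> \<and> \<theta> \<le> 1 \<and>
           {v \<in> V. x v \<ge> \<theta>} \<noteq> {} \<and>
           density E c {v \<in> V. x v \<ge> \<theta>} \<ge> lam"
proof -
  have finV: "finite V" using G unfolding simple_graph_def by simp
  obtain xs where xs: "distinct xs" "set xs = V" using finite_distinct_list[OF finV] by blast
  define \<sigma> where "\<sigma> = sort_key (\<lambda>v. - x v) xs"
  have dist: "distinct \<sigma>" and setv: "set \<sigma> = V" using xs by (auto simp: \<sigma>_def)
  have ord: "is_ordering V \<sigma>" using dist setv by (simp add: is_ordering_def)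
  have "sorted (map (\<lambda>v. - x v) \<sigma>)" by (simp add: \<sigma>_def)
  then have srt: "sorted_wrt (\<lambda>u w. x u \<ge> x w) \<sigma>" by (simp add: sorted_map)
  define S where "S \<theta> = {v\<in>V. x v \<ge> \<theta>}" for \<theta>
  define F where "F u = real (card (induced_edges E (S (x u)))) - lam * (\<Sum>v\<in>S (x u). c v)" for u
  define B where "B = Max (F ` V)"
  define g where "g v = real (q E \<sigma> v) - lam * c v" for v
  have Vne: "V \<noteq> {}" using x_norm by auto
  have prec: "x u \<ge> x v" if "precedes \<sigma> u v" for u v
    using that srt unfolding precedes_def by (auto simp: sorted_wrt_iff_nth_less)
  have cond: "\<forall>i<length \<sigma>. x (\<sigma>!i) > hv x (drop (Suc i) \<sigma>) \<longrightarrow> sum_list (map g ([] @ take (Suc i) \<sigma>)) \<le> B"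
  proof (intro allI impI)
    fix i assume i: "i < length \<sigma>" and drp: "x (\<sigma>!i) > hv x (drop (Suc i) \<sigma>)"
    have vi: "\<sigma>!i \<in> V" using i setv by auto
    have seteq: "set (take (Suc i) \<sigma>) = S (x (\<sigma>!i))"
    proof
      show "set (take (Suc i) \<sigma>) \<subseteq> S (x (\<sigma>!i))"
      proof
        fix v assume "v \<in> set (take (Suc i) \<sigma>)"
        then obtain j where j: "j < length (take (Suc i) \<sigma>)" "take (Suc i) \<sigma> ! j = v" by (metis in_set_conv_nth)
        then have "j \<le> i" "\<sigma>!j = v" "j < length \<sigma>" by auto
        then have "x v \<ge> x (\<sigma>!i)" using srt i
          by (metis le_neq_implies_less order.refl sorted_wrt_nth_less)
        then show "v \<in> S (x (\<sigma>!i))" unfolding S_def using \<open>\<sigma>!j = v\<close> \<open>j < length \<sigma>\<close> setv by auto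
      qed
    next
      show "S (x (\<sigma>!i)) \<subseteq> set (take (Suc i) \<sigma>)"
      proof
        fix v assume "v \<in> S (x (\<sigma>!i))"
        then have vV: "v \<in> V" and xv: "x v \<ge> x (\<sigma>!i)" unfolding S_def by auto
        obtain j where j: "j < length \<sigma>" "\<sigma>!j = v" using vV setv by (metis in_set_conv_nth)
        have "j \<le> i"
        proof (rule ccontr)
          assume "\<not> j \<le> i"
          then have si: "Suc i < length \<sigma>" "Suc i \<le> j" using j by auto
          have h: "hv x (drop (Suc i) \<sigma>) = x (\<sigma>!Suc i)" using si
            by (simp add: Cons_nth_drop_Suc[symmetric])
          have "x v \<le> x (\<sigma>!Suc i)" using si j srt
            by (metis le_neq_implies_less order.refl sorted_wrt_nth_less)
          then show False using xv drp h by simp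
        qed
        then show "v \<in> set (take (Suc i) \<sigma>)" using j by (metis in_set_conv_nth length_take min_less_iff_conj nth_take le_imp_less_Suc)
      qed
    qed
    have SsubV: "S (x (\<sigma>!i)) \<subseteq> V" unfolding S_def by auto
    have closed: "\<forall>u v. precedes \<sigma> u v \<longrightarrow> v \<in> S (x (\<sigma>!i)) \<longrightarrow> u \<in> S (x (\<sigma>!i))"
    proof (intro allI impI)
      fix u v assume p: "precedes \<sigma> u v" and "v \<in> S (x (\<sigma>!i))"
      then have "x u \<ge> x (\<sigma>!i)" using prec[OF p] unfolding S_def by auto
      moreover have "u \<in> V" using p setv unfolding precedes_def by auto
      ultimately show "u \<in> S (x (\<sigma>!i))" unfolding S_def by auto
    qed
    have "sum_list (map g ([] @ take (Suc i) \<sigma>)) = (\<Sum>v\<in>S (x (\<sigma>!i)). g v)"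
      using seteq dist by (simp add: sum_list_distinct_conv_sum_set)
    also have "\<dots> = (\<Sum>v\<in>S (x (\<sigma>!i)). real (q E \<sigma> v)) - lam * (\<Sum>v\<in>S (x (\<sigma>!i)). c v)"
      by (simp add: g_def sum_subtractf sum_distrib_left)
    also have "\<dots> = F (\<sigma>!i)"
      using edge_count[OF G ord SsubV closed] unfolding F_def by (metis of_nat_sum)
    also have "\<dots> \<le> B" unfolding B_def using finV vi by simp
    finally show "sum_list (map g ([] @ take (Suc i) \<sigma>)) \<le> B" .
  qed
  have nn: "\<forall>v\<in>set \<sigma>. x v \<ge> 0" using x_nonneg setv by simp
  have key: "sum_list (map g []) * hv x \<sigma> + sum_list (map (\<lambda>v. x v * g v) \<sigma>) \<le> B * hv x \<sigma>"
    by (rule abel[OF srt nn cond])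
  have "sum_list (map (\<lambda>v. x v * g v) \<sigma>) = (\<Sum>v\<in>V. x v * g v)"
    using dist setv by (simp add: sum_list_distinct_conv_sum_set)
  also have "\<dots> = (\<Sum>v\<in>V. x v * real (q E \<sigma> v)) - lam * (\<Sum>v\<in>V. c v * x v)"
    by (simp add: g_def algebra_simps sum_subtractf sum_distrib_left)
  also have "\<dots> \<ge> 0" using x_orders ord x_norm by auto
  finally have B0: "B * hv x \<sigma> \<ge> 0" using key by simp
  obtain v0 rest where \<sigma>c: "\<sigma> = v0 # rest" using Vne setv by (cases \<sigma>) auto
  have hpos: "hv x \<sigma> > 0"
  proof (rule ccontr)
    assume "\<not> hv x \<sigma> > 0"
    then have h0: "x v0 \<le> 0" using \<sigma>c by simp
    have "\<forall>v\<in>V. x v = 0"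
    proof
      fix v assume "v \<in> V"
      then have "v = v0 \<or> v \<in> set rest" using setv \<sigma>c by auto
      then have "x v \<le> x v0" using srt \<sigma>c by auto
      then show "x v = 0" using h0 x_nonneg \<open>v \<in> V\<close> by force
    qed
    then show False using x_norm by simp
  qed
  have "B \<ge> 0" using B0 hpos by (simp add: zero_le_mult_iff)
  have "B \<in> F ` V" unfolding B_def using finV Vne by simp
  then obtain u where u: "u \<in> V" "F u = B" by auto
  have Fu: "F u \<ge> 0" using u \<open>B \<ge> 0\<close> by simp
  have xu1: "x u \<le> 1"
  proof -
    have "c u * x u \<le> (\<Sum>v\<in>V. c v * x v)"
      using u finV c_ge x_nonneg by (intro member_le_sum) auto
    moreover have "x u \<le> c u * x u" using c_ge x_nonneg u
      by (metis mult_le_cancel_right1 order.strict_iff_not)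
    ultimately show ?thesis using x_norm by simp
  qed
  have Sne: "S (x u) \<noteq> {}" using u unfolding S_def by auto
  have cpos: "(\<Sum>v\<in>S (x u). c v) > 0"
    using Sne finV c_ge unfolding S_def by (intro sum_pos) auto
  have "density E c (S (x u)) \<ge> lam"
    using Fu cpos unfolding F_def density_def by (simp add: pos_le_divide_eq)
  then show ?thesis using Sne xu1 x_nonneg u unfolding S_def by blast
qed
end
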